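(* Let $k\in\mathbb{N}$ and let $u=a_1\cdots a_n$ (with letters $a_i$ of a totally ordered finite alphabet $A$) be a word of minimal length within its $\sim_k$-class. Suppose the attributes $(x_i,y_i)$ of $u$ satisfy, for all positions $i<n$: if $(x_i,y_i)=(x_{i+1},y_{i+1})$ and $x_i+y_i=k+1$, then $a_i\le a_{i+1}$. Then $u$ is the shortlex normal form of its $\sim_k$-class.
   Context: $u\sim_k v$ iff $u,v$ have the same scattered subwords of length at most $k$. For words of equal length, $u$ is lexicographically smaller than $v$ if for some word $p$ and letters $a<b$, $pa$ is a prefix of $u$ and $pb$ a prefix of $v$. The shortlex normal form of the $\sim_k$-class of $u$ is the lexicographically smallest word among the shortest words $w$ with $w\sim_k u$. An X-ranker is a nonempty word over $\{\mathsf X_a : a\in A\}$, a Y-ranker a nonempty word over $\{\mathsf Y_a:a\in A\}$, length = word length. For a word $w$: $\mathsf X_a(w)$ is the smallest $a$-position, $r\mathsf X_a(w)$ the smallest $a$-position greater than $r(w)$; $\mathsf Y_a(w)$ the greatest $a$-position, $r\mathsf Y_a(w)$ the greatest $a$-position smaller than $r(w)$ (possibly undefined). The attribute of position $p$ of $u$ is $(x_p,y_p)$, $x_p$ (resp. $y_p$) the minimal length of an X-ranker (resp. Y-ranker) reaching $p$ in $u$. *)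

theory Defs
  imports "HOL-Library.Sublist"
begin

text \<open>Words are lists over a linearly ordered type of letters; positions are 0-indexed.\<close>

definition sim_k :: "nat \<Rightarrow> 'a list \<Rightarrow> 'a list \<Rightarrow> bool" where
  "sim_k k u v \<longleftrightarrow> (\<forall>w. length w \<le> k \<longrightarrow> (subseq w u \<longleftrightarrow> subseq w v))"

definition lex_less :: "'a::linorder list \<Rightarrow> 'a list \<Rightarrow> bool" where
  "lex_less u v \<longleftrightarrow> (\<exists>p a b s t. a < b \<and> u = p @ a # s \<and> v = p @ b # t)"

definition is_shortlex_nf :: "nat \<Rightarrow> 'a::linorder list \<Rightarrow> 'a list \<Rightarrow> bool" where
  "is_shortlex_nf k u w \<longleftrightarrow> sim_k k w u
     \<and> (\<forall>v. sim_k k v u \<longrightarrow> length w \<le> length v)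
     \<and> (\<forall>v. sim_k k v u \<and> length v = length w \<longrightarrow> v = w \<or> lex_less w v)"

definition next_pos :: "'a list \<Rightarrow> nat \<Rightarrow> 'a \<Rightarrow> nat option" where
  "next_pos w lb a = (if \<exists>p. lb \<le> p \<and> p < length w \<and> w ! p = a
     then Some (LEAST p. lb \<le> p \<and> p < length w \<and> w ! p = a) else None)"

definition prev_pos :: "'a list \<Rightarrow> nat \<Rightarrow> 'a \<Rightarrow> nat option" where
  "prev_pos w ub a = (if \<exists>p. p < ub \<and> p < length w \<and> w ! p = a
     then Some (GREATEST p. p < ub \<and> p < length w \<and> w ! p = a) else None)"

text \<open>An X-ranker X_{a1}...X_{am} is represented by the nonempty
  letter list [a1,...,am], evaluated left to right: X_{a1}(w) is the first a1-position,
  r X_a (w) is the first a-position strictly after r(w). Dually for Y-rankers.\<close>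
fun xrun :: "'a list \<Rightarrow> nat \<Rightarrow> 'a list \<Rightarrow> nat option" where
  "xrun w lb [] = None"
| "xrun w lb [a] = next_pos w lb a"
| "xrun w lb (a # b # rs) = (case next_pos w lb a of None \<Rightarrow> None | Some p \<Rightarrow> xrun w (Suc p) (b # rs))"

fun yrun :: "'a list \<Rightarrow> nat \<Rightarrow> 'a list \<Rightarrow> nat option" where
  "yrun w ub [] = None"
| "yrun w ub [a] = prev_pos w ub a"
| "yrun w ub (a # b # rs) = (case prev_pos w ub a of None \<Rightarrow> None | Some p \<Rightarrow> yrun w p (b # rs))"

definition xranker :: "'a list \<Rightarrow> 'a list \<Rightarrow> nat option" where
  "xranker r w = xrun w 0 r"

definition yranker :: "'a list \<Rightarrow> 'a list \<Rightarrow> nat option" where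
  "yranker r w = yrun w (length w) r"

definition x_attr :: "'a list \<Rightarrow> nat \<Rightarrow> nat" where
  "x_attr u p = (LEAST n. \<exists>r. r \<noteq> [] \<and> length r = n \<and> xranker r u = Some p)"

definition y_attr :: "'a list \<Rightarrow> nat \<Rightarrow> nat" where
  "y_attr u p = (LEAST n. \<exists>r. r \<noteq> [] \<and> length r = n \<and> yranker r u = Some p)"

end

theory Submission
  imports Defs
begin


lemma subseq_split:
  assumes "subseq (xs @ ys) w"
  shows "\<exists>N. subseq xs (take N w) \<and> subseq ys (drop N w)"
proof -
  obtain us vs where "w = us @ vs" "subseq xs us" "subseq ys vs"
    using list_emb_appendD[OF assms] by blast
  then show ?thesis by (intro exI[of _ "length us"]) simp
qed

lemma subseq_take_mono: "m \<le> n \<Longrightarrow> subseq (take m w) (take n w)"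
proof -
  assume "m \<le> n"
  then have "take m w = take m (take n w)" by (simp add: min_def)
  then show ?thesis by (metis prefix_imp_subseq take_is_prefix)
qed

lemma subseq_drop_mono: "m \<le> n \<Longrightarrow> subseq (drop n w) (drop m w)"
proof -
  assume "m \<le> n"
  then have "drop n w = drop (n - m) (drop m w)" by simp
  then show ?thesis by (metis suffix_imp_subseq suffix_drop)
qed

lemma subseq_Cons_set: assumes "subseq (a # z) xs" shows "a \<in> set xs"
proof -
  have "subseq [a] (a#z)" by simp
  then have "subseq [a] xs" using assms by (rule subseq_order.trans)
  then show ?thesis by (simp add: subseq_singleton_left)
qed

lemma in_seg: "a \<in> set (drop lb (take n w)) \<longleftrightarrow> (\<exists>q. lb \<le> q \<and> q < n \<and> q < length w \<and> w ! q = a)"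
proof
  assume "a \<in> set (drop lb (take n w))"
  then obtain i where "i < length (drop lb (take n w))" "drop lb (take n w) ! i = a"
    by (auto simp: in_set_conv_nth)
  then show "\<exists>q. lb \<le> q \<and> q < n \<and> q < length w \<and> w ! q = a"
  proof -
    have "lb \<le> length (take n w)" using \<open>i < length (drop lb (take n w))\<close> by (simp only: length_drop)
    then have "drop lb (take n w) ! i = take n w ! (lb + i)" by (rule nth_drop)
    then show ?thesis using \<open>i < length (drop lb (take n w))\<close> \<open>drop lb (take n w) ! i = a\<close>
      by (intro exI[of _ "lb + i"]) auto
  qed
next
  assume "\<exists>q. lb \<le> q \<and> q < n \<and> q < length w \<and> w ! q = a"
  then obtain q where q: "lb \<le> q" "q < n" "q < length w" "w ! q = a" by blast
  then have "drop lb (take n w) ! (q - lb) = a" "q - lb < length (drop lb (take n w))" by auto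
  then show "a \<in> set (drop lb (take n w))" by (metis nth_mem)
qed

lemma next_pos_Some: "next_pos w lb a = Some x \<longleftrightarrow>
   lb \<le> x \<and> x < length w \<and> w ! x = a \<and> (\<forall>q. lb \<le> q \<and> q < x \<longrightarrow> w ! q \<noteq> a)"
proof
  assume h: "next_pos w lb a = Some x"
  let ?P = "\<lambda>p. lb \<le> p \<and> p < length w \<and> w ! p = a"
  have ex: "\<exists>p. ?P p"
  proof (rule ccontr)
    assume "\<not> (\<exists>p. ?P p)"
    then have "next_pos w lb a = None" unfolding next_pos_def by simp
    then show False using h by simp
  qed
  then have "next_pos w lb a = Some (LEAST p. ?P p)" unfolding next_pos_def by simp
  then have x: "x = (LEAST p. ?P p)" using h by simp
  have "?P x" using LeastI_ex[OF ex] x by simp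
  moreover have "\<forall>q. lb \<le> q \<and> q < x \<longrightarrow> w ! q \<noteq> a"
  proof (intro allI impI notI)
    fix q assume q: "lb \<le> q \<and> q < x" "w ! q = a"
    then have "?P q" using \<open>?P x\<close> by auto
    then have "x \<le> q" unfolding x by (rule Least_le)
    then show False using q by simp
  qed
  ultimately show "lb \<le> x \<and> x < length w \<and> w ! x = a \<and> (\<forall>q. lb \<le> q \<and> q < x \<longrightarrow> w ! q \<noteq> a)" by blast
next
  assume h: "lb \<le> x \<and> x < length w \<and> w ! x = a \<and> (\<forall>q. lb \<le> q \<and> q < x \<longrightarrow> w ! q \<noteq> a)"
  let ?P = "\<lambda>p. lb \<le> p \<and> p < length w \<and> w ! p = a"
  have L: "(LEAST p. ?P p) = x"
  proof (rule Least_equality)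
    show "?P x" using h by blast
    fix y assume y: "?P y" show "x \<le> y"
    proof (rule ccontr)
      assume "\<not> x \<le> y"
      then have "y < x" by simp
      then show False using h y by blast
    qed
  qed
  have ex: "\<exists>p. ?P p" using h by blast
  have "next_pos w lb a = Some (LEAST p. ?P p)" unfolding next_pos_def using ex by simp
  then show "next_pos w lb a = Some x" using L by simp
qed

lemma prev_pos_Some: "prev_pos w ub a = Some y \<longleftrightarrow>
   y < ub \<and> y < length w \<and> w ! y = a \<and> (\<forall>q. y < q \<and> q < ub \<and> q < length w \<longrightarrow> w ! q \<noteq> a)"
proof
  assume h: "prev_pos w ub a = Some y"
  let ?P = "\<lambda>p. p < ub \<and> p < length w \<and> w ! p = a"
  have ex: "\<exists>p. ?P p"
  proof (rule ccontr)
    assume "\<not> (\<exists>p. ?P p)"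
    then have "prev_pos w ub a = None" unfolding prev_pos_def by simp
    then show False using h by simp
  qed
  then obtain k where k: "?P k" by blast
  have "prev_pos w ub a = Some (GREATEST p. ?P p)" unfolding prev_pos_def using ex by simp
  then have y: "y = (GREATEST p. ?P p)" using h by simp
  have b: "\<forall>p. ?P p \<longrightarrow> p \<le> length w" by auto
  have "?P y" using GreatestI_nat[of ?P k "length w"] k b y by blast
  moreover have "\<forall>q. y < q \<and> q < ub \<and> q < length w \<longrightarrow> w ! q \<noteq> a"
  proof (intro allI impI notI)
    fix q assume q: "y < q \<and> q < ub \<and> q < length w" "w ! q = a"
    then have "?P q" by auto
    then have "q \<le> y" unfolding y using Greatest_le_nat[of ?P q "length w"] b by blast
    then show False using q by simp
  qed
  ultimately show "y < ub \<and> y < length w \<and> w ! y = a \<and> (\<forall>q. y < q \<and> q < ub \<and> q < length w \<longrightarrow> w ! q \<noteq> a)" by blast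
next
  assume h: "y < ub \<and> y < length w \<and> w ! y = a \<and> (\<forall>q. y < q \<and> q < ub \<and> q < length w \<longrightarrow> w ! q \<noteq> a)"
  let ?P = "\<lambda>p. p < ub \<and> p < length w \<and> w ! p = a"
  have L: "(GREATEST p. ?P p) = y"
  proof (rule Greatest_equality)
    show "?P y" using h by blast
    fix z assume z: "?P z" show "z \<le> y"
    proof (rule ccontr)
      assume "\<not> z \<le> y"
      then have "y < z" by simp
      then show False using h z by blast
    qed
  qed
  have ex: "\<exists>p. ?P p" using h by blast
  have "prev_pos w ub a = Some (GREATEST p. ?P p)" unfolding prev_pos_def using ex by simp
  then show "prev_pos w ub a = Some y" using L by simp
qed



lemma subseq_skip_prefix:
  assumes "a \<notin> set ys" shows "subseq (a # z) (ys @ a # zs) \<longleftrightarrow> subseq z zs"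
  using assms by (induct ys) auto

lemma subseq_skip_suffix:
  assumes "a \<notin> set zs" shows "subseq (z @ [a]) (ys @ a # zs) \<longleftrightarrow> subseq z ys"
proof
  assume h: "subseq (z @ [a]) (ys @ a # zs)"
  then obtain xs1 xs2 where e: "z @ [a] = xs1 @ xs2" "subseq xs1 (ys @ [a])" "subseq xs2 zs"
    by (metis append.assoc append_Cons append_Nil subseq_appendE)
  have "xs2 = []"
  proof (rule ccontr)
    assume "xs2 \<noteq> []"
    then have "last xs2 = a" using e(1) by (metis last_appendR last_snoc)
    then have "a \<in> set xs2" using \<open>xs2 \<noteq> []\<close> by (metis last_in_set)
    obtain y where "y \<in> set zs" "a = y" by (rule list_emb_set[OF e(3) \<open>a \<in> set xs2\<close>])
    then show False using assms by simp
  qed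
  then have "subseq (z @ [a]) (ys @ [a])" using e by simp
  then show "subseq z ys" by simp
next
  assume "subseq z ys"
  then have "subseq (z @ [a]) (ys @ [a])" by simp
  then show "subseq (z @ [a]) (ys @ a # zs)" by (metis append.assoc append_Cons append_Nil subseq_rev_drop_many)
qed

lemma seg_split:
  assumes "lb \<le> p" "p < N" "p < length w"
  shows "drop lb (take N w) = drop lb (take p w) @ w ! p # drop (Suc p) (take N w)"
proof -
  have "take N w = take p w @ drop p (take N w)"
    using assms by (metis append_take_drop_id min.absorb1 less_imp_le_nat take_take)
  moreover have "drop p (take N w) = w ! p # drop (Suc p) (take N w)"
    using assms by (metis Cons_nth_drop_Suc length_take min_less_iff_conj nth_take)
  ultimately have "take N w = take p w @ w ! p # drop (Suc p) (take N w)" by simp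
  then have "drop lb (take N w) = drop lb (take p w @ w ! p # drop (Suc p) (take N w))" by simp
  also have "\<dots> = drop lb (take p w) @ w ! p # drop (Suc p) (take N w)"
    using assms by (simp add: drop_append)
  finally show ?thesis .
qed

lemma subseq_snoc_set: assumes "subseq (z @ [a]) xs" shows "a \<in> set xs"
proof -
  have "subseq [a] (z @ [a])" by (rule subseq_drop_many) simp
  then have "subseq [a] xs" using assms by (rule subseq_order.trans)
  then show ?thesis by (simp add: subseq_singleton_left)
qed

lemma next_pos_None: "next_pos w lb a = None \<longleftrightarrow> \<not> (\<exists>p. lb \<le> p \<and> p < length w \<and> w ! p = a)"
  unfolding next_pos_def by (simp; blast)

lemma prev_pos_None: "prev_pos w ub a = None \<longleftrightarrow> \<not> (\<exists>p. p < ub \<and> p < length w \<and> w ! p = a)"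
  unfolding prev_pos_def by (simp; blast)

lemma seg_subseq_Cons:
  assumes "z \<noteq> []"
  shows "subseq (a # z) (drop lb (take N w)) \<longleftrightarrow>
    (\<exists>p. next_pos w lb a = Some p \<and> subseq z (drop (Suc p) (take N w)))"
proof (cases "next_pos w lb a")
  case None
  then have "a \<notin> set (drop lb (take N w))" by (auto simp: in_seg next_pos_None)
  then show ?thesis using None by (auto dest: subseq_Cons_set)
next
  case (Some p)
  then have np: "lb \<le> p" "p < length w" "w ! p = a" "\<forall>q. lb \<le> q \<and> q < p \<longrightarrow> w ! q \<noteq> a"
    by (auto simp: next_pos_Some)
  show ?thesis
  proof (cases "p < N")
    case True
    have e: "drop lb (take N w) = drop lb (take p w) @ w ! p # drop (Suc p) (take N w)"
      using np True by (intro seg_split) auto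
    have "a \<notin> set (drop lb (take p w))" using np by (auto simp: in_seg)
    then have "subseq (a # z) (drop lb (take N w)) \<longleftrightarrow> subseq z (drop (Suc p) (take N w))"
      unfolding e np(3) by (rule subseq_skip_prefix)
    then show ?thesis using Some by simp
  next
    case False
    have "a \<notin> set (drop lb (take N w))" using np False by (auto simp: in_seg)
    moreover have "drop (Suc p) (take N w) = []" using False by simp
    ultimately show ?thesis using Some assms by (auto dest: subseq_Cons_set)
  qed
qed

lemma seg_subseq_snoc:
  assumes "z \<noteq> []"
  shows "subseq (z @ [a]) (drop M (take ub w)) \<longleftrightarrow>
    (\<exists>p. prev_pos w ub a = Some p \<and> subseq z (drop M (take p w)))"
proof (cases "prev_pos w ub a")
  case None
  then have "a \<notin> set (drop M (take ub w))" by (auto simp: in_seg prev_pos_None)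
  then show ?thesis using None by (auto dest: subseq_snoc_set)
next
  case (Some p)
  then have np: "p < ub" "p < length w" "w ! p = a" "\<forall>q. p < q \<and> q < ub \<and> q < length w \<longrightarrow> w ! q \<noteq> a"
    by (auto simp: prev_pos_Some)
  show ?thesis
  proof (cases "M \<le> p")
    case True
    have e: "drop M (take ub w) = drop M (take p w) @ w ! p # drop (Suc p) (take ub w)"
      using np True by (intro seg_split) auto
    have "a \<notin> set (drop (Suc p) (take ub w))" using np by (auto simp: in_seg)
    then have "subseq (z @ [a]) (drop M (take ub w)) \<longleftrightarrow> subseq z (drop M (take p w))"
      unfolding e np(3) by (rule subseq_skip_suffix)
    then show ?thesis using Some by simp
  next
    case False
    have "a \<notin> set (drop M (take ub w))" using np False by (auto simp: in_seg)
    moreover have "drop M (take p w) = []" using False by simp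
    ultimately show ?thesis using Some assms by (auto dest: subseq_snoc_set)
  qed
qed

lemma xrun_char:
  "xrun w lb r = Some x \<longleftrightarrow> r \<noteq> [] \<and> x < length w \<and>
     subseq r (drop lb (take (Suc x) w)) \<and> \<not> subseq r (drop lb (take x w))"
proof (induction w lb r arbitrary: x rule: xrun.induct)
  case (1 w lb)
  then show ?case by simp
next
  case (2 w lb a)
  show ?case
    by (auto simp: next_pos_Some subseq_singleton_left in_seg less_Suc_eq)
next
  case (3 w lb a b rs)
  show ?case
  proof (cases "next_pos w lb a")
    case None
    then show ?thesis by (simp add: seg_subseq_Cons)
  next
    case (Some p)
    then show ?thesis using "3"[OF Some] by (simp add: seg_subseq_Cons)
  qed
qed

lemma yrun_char:
  "yrun w ub r = Some y \<longleftrightarrow> r \<noteq> [] \<and> y < length w \<and>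
     subseq (rev r) (drop y (take ub w)) \<and> \<not> subseq (rev r) (drop (Suc y) (take ub w))"
proof (induction w ub r arbitrary: y rule: yrun.induct)
  case (1 w ub)
  then show ?case by simp
next
  case (2 w ub a)
  show ?case
    by (auto simp: prev_pos_Some subseq_singleton_left in_seg Suc_le_eq)
next
  case (3 w ub a b rs)
  have ne: "rev (b # rs) \<noteq> []" by simp
  show ?case
  proof (cases "prev_pos w ub a")
    case None
    then show ?thesis using seg_subseq_snoc[OF ne, of a] by simp
  next
    case (Some p)
    then show ?thesis using "3"[OF Some] seg_subseq_snoc[OF ne, of a] by simp
  qed
qed



lemma XC: "xranker r w = Some x \<longleftrightarrow> r \<noteq> [] \<and> x < length w \<and>
     subseq r (take (Suc x) w) \<and> \<not> subseq r (take x w)"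
  unfolding xranker_def by (simp add: xrun_char)

lemma YC: "yranker r w = Some y \<longleftrightarrow> r \<noteq> [] \<and> y < length w \<and>
     subseq (rev r) (drop y w) \<and> \<not> subseq (rev r) (drop (Suc y) w)"
  unfolding yranker_def by (simp add: yrun_char)

lemma X_nonempty: "xranker r w = Some l \<Longrightarrow> r \<noteq> []" by (simp add: XC)
lemma Y_nonempty: "yranker r w = Some l \<Longrightarrow> r \<noteq> []" by (simp add: YC)


lemma X_least: assumes "xranker r w = Some x" "subseq r (take N w)" shows "x < N"
proof (rule ccontr)
  assume "\<not> x < N"
  then have "subseq (take N w) (take x w)" by (intro subseq_take_mono) simp
  then have "subseq r (take x w)" using assms(2) by (rule subseq_order.trans[rotated])
  then show False using assms(1) by (simp add: XC)
qed

lemma Y_great: assumes "yranker r w = Some y" "subseq (rev r) (drop N w)" shows "N \<le> y"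
proof (rule ccontr)
  assume "\<not> N \<le> y"
  then have "subseq (drop N w) (drop (Suc y) w)" by (intro subseq_drop_mono) simp
  then have "subseq (rev r) (drop (Suc y) w)" using assms(2) by (rule subseq_order.trans[rotated])
  then show False using assms(1) by (simp add: YC)
qed

lemma X_sub: "xranker r w = Some x \<Longrightarrow> subseq r w"
  by (metis XC subseq_order.trans prefix_imp_subseq take_is_prefix)

lemma Y_sub: "yranker r w = Some y \<Longrightarrow> subseq (rev r) w"
  by (metis YC subseq_order.trans suffix_imp_subseq suffix_drop)

lemma X_exists: assumes "r \<noteq> []" "subseq r w" shows "\<exists>x. xranker r w = Some x"
proof -
  let ?P = "\<lambda>n. subseq r (take n w)"
  have ex: "?P (length w)" using assms by simp
  define N where "N = (LEAST n. ?P n)"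
  have PN: "?P N" unfolding N_def using ex by (rule LeastI)
  have N0: "N \<noteq> 0"
  proof
    assume "N = 0"
    with PN have "subseq r []" by simp
    then show False using assms(1) by simp
  qed
  have notP: "\<not> ?P (N - 1)" using N0 unfolding N_def
    by (metis (no_types, lifting) N_def diff_less not_less_Least zero_less_iff_neq_zero less_one)
  have "N - 1 < length w"
  proof (rule ccontr)
    assume "\<not> N - 1 < length w"
    then have "take (N - 1) w = w" by simp
    then show False using notP assms(2) by simp
  qed
  moreover have "Suc (N - 1) = N" using N0 by simp
  ultimately have "xranker r w = Some (N - 1)" using PN notP assms(1) by (simp add: XC)
  then show ?thesis by blast
qed

lemma Y_exists: assumes "r \<noteq> []" "subseq (rev r) w" shows "\<exists>y. yranker r w = Some y"
proof -
  let ?P = "\<lambda>n. n < length w \<and> subseq (rev r) (drop n w)"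
  have w: "w \<noteq> []" using assms by (metis list_emb_Nil2 rev_is_Nil_conv)
  have ex: "?P 0" using assms w by simp
  have b: "\<forall>n. ?P n \<longrightarrow> n \<le> length w" by auto
  define Y where "Y = (GREATEST n. ?P n)"
  have PY: "?P Y" unfolding Y_def using GreatestI_nat[of ?P 0 "length w"] ex b by blast
  have notP: "\<not> subseq (rev r) (drop (Suc Y) w)"
  proof
    assume h: "subseq (rev r) (drop (Suc Y) w)"
    show False
    proof (cases "Suc Y < length w")
      case True
      then have "Suc Y \<le> Y" unfolding Y_def using h Greatest_le_nat[of ?P "Suc Y" "length w"] b
        by (metis Y_def)
      then show False by simp
    next
      case False
      then have "drop (Suc Y) w = []" by simp
      then show False using h assms(1) by simp
    qed
  qed
  have "yranker r w = Some Y" using PY notP assms(1) by (simp add: YC)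
  then show ?thesis by blast
qed

lemma xrun_last: "xrun w lb r = Some x \<Longrightarrow> w ! x = last r"
proof (induction w lb r rule: xrun.induct)
  case (2 w lb a) then show ?case by (simp add: next_pos_Some)
next
  case (3 w lb a b rs) then show ?case by (auto split: option.splits)
qed simp

lemma yrun_last: "yrun w ub r = Some x \<Longrightarrow> w ! x = last r"
proof (induction w ub r rule: yrun.induct)
  case (2 w ub a) then show ?case by (simp add: prev_pos_Some)
next
  case (3 w ub a b rs) then show ?case by (auto split: option.splits)
qed simp

lemma X_last: "xranker r w = Some x \<Longrightarrow> w ! x = last r"
  unfolding xranker_def by (rule xrun_last)

lemma Y_last: "yranker r w = Some x \<Longrightarrow> w ! x = last r"
  unfolding yranker_def by (rule yrun_last)

lemma X_prefix:
  assumes "xranker r (p @ r1) = Some x" "x < length p"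
  shows "xranker r (p @ r2) = Some x"
proof -
  have "take (Suc x) (p @ r1) = take (Suc x) (p @ r2)" "take x (p @ r1) = take x (p @ r2)"
    using assms(2) by simp_all
  then show ?thesis using assms by (simp add: XC)
qed

lemma x_attr_ex: assumes "l < length w"
  shows "\<exists>r. xranker r w = Some l \<and> length r = x_attr w l"
proof -
  let ?P = "\<lambda>n. \<exists>r. r \<noteq> [] \<and> length r = n \<and> xranker r w = Some l"
  have "w \<noteq> []" using assms by auto
  then have "xranker (take (Suc l) w) w = Some l"
    using assms by (simp add: XC not_subseq_length)
  then have "?P (length (take (Suc l) w))" using X_nonempty by blast
  then have "?P (x_attr w l)" unfolding x_attr_def by (rule LeastI)
  then show ?thesis by auto
qed

lemma x_attr_le: "xranker r w = Some l \<Longrightarrow> x_attr w l \<le> length r"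
  unfolding x_attr_def by (rule Least_le) (auto simp: XC)

lemma y_attr_ex: assumes "l < length w"
  shows "\<exists>r. yranker r w = Some l \<and> length r = y_attr w l"
proof -
  let ?P = "\<lambda>n. \<exists>r. r \<noteq> [] \<and> length r = n \<and> yranker r w = Some l"
  have "yranker (rev (drop l w)) w = Some l"
    using assms by (simp add: YC not_subseq_length)
  then have "?P (length (rev (drop l w)))" using Y_nonempty by blast
  then have "?P (y_attr w l)" unfolding y_attr_def by (rule LeastI)
  then show ?thesis by auto
qed

lemma y_attr_le: "yranker r w = Some l \<Longrightarrow> y_attr w l \<le> length r"
  unfolding y_attr_def by (rule Least_le) (auto simp: YC)




lemma sim_k_sym: "sim_k k u v \<Longrightarrow> sim_k k v u"
  unfolding sim_k_def by blast

lemma sim_k_trans: "sim_k k u v \<Longrightarrow> sim_k k v w \<Longrightarrow> sim_k k u w"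
  unfolding sim_k_def by blast

lemma sim_k_refl: "sim_k k u u"
  unfolding sim_k_def by blast

lemma cons_split: "subseq (c # z) (A @ B) \<Longrightarrow> c \<in> set A \<or> subseq (c # z) B"
  by (induct A) (auto split: if_splits)

lemma del_equiv:
  assumes l: "l < length u" and big: "k + 1 < x_attr u l + y_attr u l"
  shows "sim_k k (take l u @ drop (Suc l) u) u"
  unfolding sim_k_def
proof (intro allI impI iffI)
  fix z :: "'a list"
  assume "subseq z (take l u @ drop (Suc l) u)"
  moreover have "subseq (take l u @ drop (Suc l) u) (take l u @ drop l u)"
    by (intro list_emb_append_mono subseq_drop_mono) auto
  ultimately show "subseq z u" by (metis append_take_drop_id subseq_order.trans)
next
  fix z :: "'a list"
  assume lz: "length z \<le> k" and zu: "subseq z u"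
  let ?P = "\<lambda>m. m \<le> length z \<and> subseq (take m z) (take l u)"
  define m where "m = (GREATEST m. ?P m)"
  have b: "\<forall>m. ?P m \<longrightarrow> m \<le> length z" by auto
  have P0: "?P 0" by simp
  have Pm: "?P m" unfolding m_def using GreatestI_nat[of ?P 0 "length z"] P0 b by blast
  have mmax: "\<And>m'. ?P m' \<Longrightarrow> m' \<le> m" unfolding m_def using Greatest_le_nat[of ?P _ "length z"] b by blast
  show "subseq z (take l u @ drop (Suc l) u)"
  proof (cases "m = length z")
    case True
    then have "subseq z (take l u)" using Pm by simp
    then show ?thesis by (rule subseq_rev_drop_many)
  next
    case False
    then have mz: "m < length z" using Pm by simp
    define c where "c = z ! m"
    define z2 where "z2 = drop (Suc m) z"
    have zdec: "z = take m z @ c # z2" unfolding c_def z2_def using mz by (simp add: id_take_nth_drop)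
    have tS: "take (Suc m) z = take m z @ [c]" unfolding c_def using mz by (simp add: take_Suc_conv_app_nth)
    have notc: "\<not> subseq (take m z @ [c]) (take l u)"
    proof
      assume "subseq (take m z @ [c]) (take l u)"
      then have "?P (Suc m)" using mz tS by simp
      then show False using mmax by fastforce
    qed
    obtain N where N1: "subseq (take m z) (take N u)" and N2: "subseq (c # z2) (drop N u)"
      using subseq_split[of "take m z" "c # z2" u] zdec zu by metis
    have cl: "subseq (c # z2) (drop l u)"
    proof (cases "l \<le> N")
      case True
      then show ?thesis using N2 subseq_drop_mono[OF True] subseq_order.trans by blast
    next
      case False
      have e: "drop N u = drop N (take l u) @ drop l u"
      proof -
        have "drop N u = drop N (take l u @ drop l u)" by simp
        also have "\<dots> = drop N (take l u) @ drop l u" using False l by (simp only: drop_append) simp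
        finally show ?thesis .
      qed
      have "c \<in> set (drop N (take l u)) \<or> subseq (c # z2) (drop l u)"
        using N2 unfolding e by (rule cons_split)
      moreover have "c \<notin> set (drop N (take l u))"
      proof
        assume "c \<in> set (drop N (take l u))"
        then have "subseq [c] (drop N (take l u))" by (simp add: subseq_singleton_left)
        moreover have "subseq (take m z) (take N (take l u))" using N1 False by (simp add: min_def)
        ultimately have "subseq (take m z @ [c]) (take N (take l u) @ drop N (take l u))"
          by (intro list_emb_append_mono)
        then show False using notc by (simp only: append_take_drop_id)
      qed
      ultimately show ?thesis by blast
    qed
    have dl: "drop l u = u ! l # drop (Suc l) u" using l by (simp add: Cons_nth_drop_Suc)
    show ?thesis
    proof (cases "subseq (c # z2) (drop (Suc l) u)")
      case True
      have "subseq (take m z @ c # z2) (take l u @ drop (Suc l) u)"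
        using Pm True by (intro list_emb_append_mono) auto
      then show ?thesis using zdec by simp
    next
      case False
      with cl dl have cu: "c = u ! l" by (auto split: if_splits)
      have "xranker (take m z @ [c]) u = Some l"
      proof -
        have "take (Suc l) u = take l u @ [c]" using l cu by (simp add: take_Suc_conv_app_nth)
        moreover have "subseq (take m z @ [c]) (take l u @ [c])" using Pm by simp
        ultimately show ?thesis using notc l by (simp add: XC)
      qed
      then have x: "x_attr u l \<le> Suc m" by (metis x_attr_le length_append_singleton length_take min_absorb2 less_imp_le mz)
      have "yranker (rev (c # z2)) u = Some l" using cl False l by (simp add: YC)
      then have y: "y_attr u l \<le> length (c # z2)" by (metis y_attr_le length_rev)
      have "length (c # z2) = length z - m" unfolding z2_def using mz by simp
      then show ?thesis using x y big lz mz by linarith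
    qed
  qed
qed

lemma min_attr:
  assumes minlen: "\<forall>v. sim_k k v u \<longrightarrow> length u \<le> length v" and l: "l < length u"
  shows "x_attr u l + y_attr u l \<le> k + 1"
proof (rule ccontr)
  assume "\<not> ?thesis"
  then have "sim_k k (take l u @ drop (Suc l) u) u" using l by (intro del_equiv) auto
  then have "length u \<le> length (take l u @ drop (Suc l) u)" using minlen by blast
  then show False using l by simp
qed



lemma sim_sub: "sim_k k u v \<Longrightarrow> length z \<le> k \<Longrightarrow> subseq z u \<longleftrightarrow> subseq z v"
  unfolding sim_k_def by blast

lemma y_attr_pos: assumes "l < length w" shows "1 \<le> y_attr w l"
proof -
  obtain r where r: "yranker r w = Some l" "length r = y_attr w l" using y_attr_ex[OF assms] by blast
  have "r \<noteq> []" using Y_nonempty[OF r(1)] .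
  then show ?thesis using r(2) by (cases r) auto
qed

lemma x_attr_pos: assumes "l < length w" shows "1 \<le> x_attr w l"
proof -
  obtain r where r: "xranker r w = Some l" "length r = x_attr w l" using x_attr_ex[OF assms] by blast
  have "r \<noteq> []" using X_nonempty[OF r(1)] .
  then show ?thesis using r(2) by (cases r) auto
qed

lemma drop_sub_trans: "subseq z (drop N w) \<Longrightarrow> M \<le> N \<Longrightarrow> subseq z (drop M w)"
  using subseq_drop_mono[of M N w] subseq_order.trans by blast

lemma take_sub_trans: "subseq z (take N w) \<Longrightarrow> N \<le> M \<Longrightarrow> subseq z (take M w)"
  using subseq_take_mono[of N M w] subseq_order.trans by blast

lemma take_Suc_snoc: "i < length w \<Longrightarrow> take (Suc i) w = take i w @ [w ! i]"
  by (simp add: take_Suc_conv_app_nth)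

lemma X_take_sub: "xranker r w = Some x \<Longrightarrow> subseq r (take (Suc x) w)"
  by (simp add: XC)

lemma Y_drop_sub: "yranker r w = Some y \<Longrightarrow> subseq (rev r) (drop y w)"
  by (simp add: YC)

lemma XY_order:
  assumes "xranker r w = Some x" "yranker s w = Some y" "x < y"
  shows "subseq (r @ rev s) w"
proof -
  have "subseq r (take (Suc x) w)" using assms(1) by (rule X_take_sub)
  moreover have "subseq (rev s) (drop (Suc x) w)"
    using assms(3) by (intro drop_sub_trans[OF Y_drop_sub[OF assms(2)]]) simp
  ultimately have "subseq (r @ rev s) (take (Suc x) w @ drop (Suc x) w)"
    by (rule list_emb_append_mono)
  then show ?thesis by simp
qed

lemma XY_order_rev:
  assumes "subseq (r @ rev s) w" "xranker r w = Some x" "yranker s w = Some y"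
  shows "x < y"
proof -
  obtain N where "subseq r (take N w)" "subseq (rev s) (drop N w)"
    using subseq_split[OF assms(1)] by blast
  then have "x < N" "N \<le> y" using X_least[OF assms(2)] Y_great[OF assms(3)] by auto
  then show ?thesis by simp
qed

lemma key1:
  assumes sim: "sim_k k u v"
    and u: "u = p @ a # s" and v: "v = p @ b # t"
    and sumv: "x_attr v (length p) + y_attr v (length p) \<le> k + 1"
    and r: "xranker r v = Some (length p)" "length r = x_attr v (length p)"
    and j: "xranker r u = Some j"
    and rho: "xranker \<rho> u = Some l" "length p \<le> l" "l < j"
  shows "x_attr v (length p) \<le> length \<rho>"
proof (rule ccontr)
  define i where "i = length p"
  define X where "X = x_attr v i"
  assume "\<not> x_attr v (length p) \<le> length \<rho>"
  then have lt: "length \<rho> < X" unfolding X_def i_def by simp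
  have iv: "i < length v" unfolding i_def v by simp
  obtain sv where sv: "yranker sv v = Some i" "length sv = y_attr v i" using y_attr_ex[OF iv] by blast
  define Y where "Y = y_attr v i"
  have Y1: "1 \<le> Y" unfolding Y_def using y_attr_pos[OF iv] .
  have XY: "X + Y \<le> k + 1" using sumv unfolding X_def Y_def i_def .
  have "subseq \<rho> u" using rho(1) by (rule X_sub)
  then have "subseq \<rho> v" using sim_sub[OF sim, of \<rho>] lt XY Y1 by simp
  then obtain l' where l': "xranker \<rho> v = Some l'" using X_exists X_nonempty[OF rho(1)] by blast
  have "\<not> l' < i"
  proof
    assume "l' < i"
    then have "xranker \<rho> u = Some l'" using X_prefix[of \<rho> p "b # t" l' "a # s"] l' u v i_def by simp
    then show False using rho \<open>l' < i\<close> i_def by simp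
  qed
  moreover have "l' \<noteq> i"
  proof
    assume "l' = i"
    then have "X \<le> length \<rho>" unfolding X_def using x_attr_le l' by blast
    then show False using lt by simp
  qed
  ultimately have "i < l'" by simp
  have n1: "\<not> subseq (\<rho> @ rev sv) v"
  proof
    assume "subseq (\<rho> @ rev sv) v"
    then have "l' < i" using XY_order_rev l' sv(1) by blast
    then show False using \<open>i < l'\<close> by simp
  qed
  have len1: "length (\<rho> @ rev sv) \<le> k" using lt XY sv(2) Y_def by simp
  have n2: "\<not> subseq (\<rho> @ rev sv) u" using n1 sim_sub[OF sim len1] by simp
  have "subseq (rev sv) v" using sv(1) by (rule Y_sub)
  then have "subseq (rev sv) u" using sim_sub[OF sim, of "rev sv"] sv(2) Y_def XY lt by simp
  then obtain y where y: "yranker sv u = Some y" using Y_exists Y_nonempty[OF sv(1)] by blast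
  have "y \<le> l"
  proof (rule ccontr)
    assume "\<not> y \<le> l"
    then have "l < y" by simp
    then have "subseq (\<rho> @ rev sv) u" by (rule XY_order[OF rho(1) y])
    then show False using n2 by simp
  qed
  have svne: "sv \<noteq> []" using Y_nonempty[OF sv(1)] .
  have lastsv: "last sv = b" using Y_last[OF sv(1)] v i_def by simp
  have revsv: "rev sv = b # rev (butlast sv)"
  proof -
    have "rev sv = rev (butlast sv @ [last sv])" using svne by simp
    then show ?thesis using lastsv by simp
  qed
  have dv: "drop i v = b # drop (Suc i) v" using v i_def by simp
  have "subseq (rev sv) (drop i v)" using sv(1) by (rule Y_drop_sub)
  then have s1: "subseq (rev (butlast sv)) (drop (Suc i) v)" unfolding revsv dv by simp
  have "subseq r (take (Suc i) v)" using r(1) i_def X_take_sub by simp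
  then have "subseq (r @ rev (butlast sv)) (take (Suc i) v @ drop (Suc i) v)"
    using s1 by (rule list_emb_append_mono)
  then have "subseq (r @ rev (butlast sv)) v" by simp
  moreover have "length (r @ rev (butlast sv)) \<le> k" using r(2) sv(2) XY Y1 X_def Y_def i_def by simp
  ultimately have "subseq (r @ rev (butlast sv)) u" using sim_sub[OF sim] by blast
  then obtain N where N: "subseq r (take N u)" "subseq (rev (butlast sv)) (drop N u)"
    using subseq_split by blast
  have "j < N" using X_least[OF j N(1)] .
  then have s2: "subseq (rev (butlast sv)) (drop (Suc j) u)"
    using \<open>j < N\<close> by (intro drop_sub_trans[OF N(2)]) simp
  have ju: "j < length u" using j by (simp add: XC)
  have "u ! j = b" using X_last[OF j] X_last[OF r(1)] v i_def by simp
  then have "drop j u = b # drop (Suc j) u" using Cons_nth_drop_Suc[OF ju] by simp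
  then have "subseq (rev sv) (drop j u)" unfolding revsv using s2 by simp
  then have "j \<le> y" using Y_great[OF y] by simp
  then show False using \<open>y \<le> l\<close> rho(3) by simp
qed



lemma chain:
  assumes sim: "sim_k k u v"
    and u: "u = p @ a # s" and v: "v = p @ b # t" and ab: "a \<noteq> b"
    and minu: "\<forall>l < length u. x_attr u l + y_attr u l \<le> k + 1"
    and minv: "\<forall>l < length v. x_attr v l + y_attr v l \<le> k + 1"
  shows "\<exists>j. length p < j \<and> j < length u \<and> u ! j = b \<and>
     (\<forall>l. length p \<le> l \<and> l \<le> j \<longrightarrow> x_attr u l = x_attr v (length p) \<and> x_attr u l + y_attr u l = k + 1)"
proof -
  define i where "i = length p"
  define X where "X = x_attr v i"
  define Xa where "Xa = x_attr u i"
  have sim': "sim_k k v u" using sim by (rule sim_k_sym)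
  have iu: "i < length u" and iv: "i < length v" unfolding i_def u v by simp_all
  have ui: "u ! i = a" and vi: "v ! i = b" unfolding i_def u v by simp_all
  obtain r where r: "xranker r v = Some i" "length r = X" using x_attr_ex[OF iv] X_def by blast
  obtain ra where ra: "xranker ra u = Some i" "length ra = Xa" using x_attr_ex[OF iu] Xa_def by blast
  have sv: "X + y_attr v i \<le> k + 1" using minv iv X_def by simp
  have su: "Xa + y_attr u i \<le> k + 1" using minu iu Xa_def by simp
  have Xk: "X \<le> k" using sv y_attr_pos[OF iv] by simp
  have Xak: "Xa \<le> k" using su y_attr_pos[OF iu] by simp
  have "subseq r u" using sim_sub[OF sim, of r] X_sub[OF r(1)] r(2) Xk by simp
  then obtain j where j: "xranker r u = Some j" using X_exists X_nonempty[OF r(1)] by blast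
  have "\<not> j < i"
  proof
    assume "j < i"
    then have "xranker r v = Some j" using X_prefix[of r p "a # s" j "b # t"] j u v i_def by simp
    then show False using r(1) \<open>j < i\<close> by simp
  qed
  moreover have uj: "u ! j = b" using X_last[OF j] X_last[OF r(1)] vi by simp
  ultimately have ij: "i < j" using ui ab by (cases "i = j") auto
  have ju: "j < length u" using j by (simp add: XC)
  have "subseq ra v" using sim_sub[OF sim, of ra] X_sub[OF ra(1)] ra(2) Xak by simp
  then obtain j' where j': "xranker ra v = Some j'" using X_exists X_nonempty[OF ra(1)] by blast
  have "\<not> j' < i"
  proof
    assume "j' < i"
    then have "xranker ra u = Some j'" using X_prefix[of ra p "b # t" j' "a # s"] j' u v i_def by simp
    then show False using ra(1) \<open>j' < i\<close> by simp
  qed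
  moreover have "v ! j' = a" using X_last[OF j'] X_last[OF ra(1)] ui by simp
  ultimately have ij': "i < j'" using vi ab by (cases "i = j'") auto
  have K1: "\<And>\<rho> l. xranker \<rho> u = Some l \<Longrightarrow> i \<le> l \<Longrightarrow> l < j \<Longrightarrow> X \<le> length \<rho>"
    using key1[OF sim u v _ _ _ j] sv r X_def i_def by simp
  have XaX: "X \<le> Xa" using K1[OF ra(1) _ ij] ra(2) by simp
  have "Xa \<le> X" using key1[OF sim' v u _ _ _ j' r(1)] su ra Xa_def i_def ij' r(2) by simp
  then have XaX': "Xa = X" using XaX by simp
  have xlow: "\<And>l. i \<le> l \<Longrightarrow> l < j \<Longrightarrow> X \<le> x_attr u l"
  proof -
    fix l assume l: "i \<le> l" "l < j"
    obtain \<rho> where rh: "xranker \<rho> u = Some l" "length \<rho> = x_attr u l"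
      using x_attr_ex[of l u] l ju by auto
    show "X \<le> x_attr u l" using K1[OF rh(1) l] rh(2) by simp
  qed
  have ylow: "\<And>l. i < l \<Longrightarrow> l \<le> j \<Longrightarrow> k + 1 - X \<le> y_attr u l"
  proof (rule ccontr)
    fix l assume l: "i < l" "l \<le> j" and nl: "\<not> k + 1 - X \<le> y_attr u l"
    obtain \<sigma> where sg: "yranker \<sigma> u = Some l" "length \<sigma> = y_attr u l"
      using y_attr_ex[of l u] l ju by auto
    have len: "X + length \<sigma> \<le> k" using nl sg(2) Xk by simp
    have "subseq (ra @ rev \<sigma>) u" using XY_order[OF ra(1) sg(1)] l by simp
    then have "subseq (ra @ rev \<sigma>) v" using sim_sub[OF sim, of "ra @ rev \<sigma>"] len ra(2) XaX' by simp
    then obtain N where N: "subseq ra (take N v)" "subseq (rev \<sigma>) (drop N v)"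
      using subseq_split by blast
    have "subseq (rev \<sigma>) v" using N(2) drop_sub_trans[of "rev \<sigma>" N v 0] by simp
    then obtain l2 where l2: "yranker \<sigma> v = Some l2" using Y_exists Y_nonempty[OF sg(1)] by blast
    have "j' < N" using X_least[OF j' N(1)] .
    moreover have "N \<le> l2" using Y_great[OF l2 N(2)] .
    ultimately have "i < l2" using ij' by simp
    then have "subseq (r @ rev \<sigma>) v" using XY_order[OF r(1) l2] by simp
    then have "subseq (r @ rev \<sigma>) u" using sim_sub[OF sim, of "r @ rev \<sigma>"] len r(2) by simp
    then have "j < l" using XY_order_rev[OF _ j sg(1)] by simp
    then show False using l by simp
  qed
  have yi: "k + 1 - X \<le> y_attr u i"
  proof (rule ccontr)
    assume nl: "\<not> k + 1 - X \<le> y_attr u i"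
    obtain \<sigma> where sg: "yranker \<sigma> u = Some i" "length \<sigma> = y_attr u i"
      using y_attr_ex[OF iu] by auto
    have len: "X + length \<sigma> \<le> k" using nl sg(2) Xk by simp
    have "subseq (rev \<sigma>) u" using Y_sub[OF sg(1)] .
    then have "subseq (rev \<sigma>) v" using sim_sub[OF sim, of "rev \<sigma>"] len by simp
    then obtain l2 where l2: "yranker \<sigma> v = Some l2" using Y_exists Y_nonempty[OF sg(1)] by blast
    have lastsg: "last \<sigma> = a" using Y_last[OF sg(1)] ui by simp
    have "\<not> i < l2"
    proof
      assume "i < l2"
      then have "subseq (r @ rev \<sigma>) v" using XY_order[OF r(1) l2] by simp
      then have "subseq (r @ rev \<sigma>) u" using sim_sub[OF sim, of "r @ rev \<sigma>"] len r(2) by simp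
      then have "j < i" using XY_order_rev[OF _ j sg(1)] by simp
      then show False using ij by simp
    qed
    moreover have "l2 \<noteq> i" using Y_last[OF l2] lastsg vi ab by auto
    ultimately have l2i: "l2 < i" by simp
    define \<rho>0 where "\<rho>0 = butlast ra"
    have rane: "ra \<noteq> []" using X_nonempty[OF ra(1)] .
    have lastra: "last ra = a" using X_last[OF ra(1)] ui by simp
    have rdec: "ra = \<rho>0 @ [a]" unfolding \<rho>0_def using append_butlast_last_id[OF rane] lastra by simp
    have "subseq ra (take (Suc i) u)" using X_take_sub[OF ra(1)] .
    then have "subseq (\<rho>0 @ [a]) (take i u @ [a])" using take_Suc_snoc[OF iu] ui rdec by simp
    then have r0: "subseq \<rho>0 (take i u)" by simp
    have "subseq (\<rho>0 @ rev \<sigma>) (take i u @ drop i u)"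
      using r0 Y_drop_sub[OF sg(1)] by (rule list_emb_append_mono)
    then have "subseq (\<rho>0 @ rev \<sigma>) u" by simp
    moreover have "length \<rho>0 = Xa - 1" using ra(2) unfolding \<rho>0_def by simp
    then have "length (\<rho>0 @ rev \<sigma>) \<le> k" using len XaX' by simp
    ultimately have "subseq (\<rho>0 @ rev \<sigma>) v" using sim_sub[OF sim] by blast
    then obtain N where N: "subseq \<rho>0 (take N v)" "subseq (rev \<sigma>) (drop N v)"
      using subseq_split by blast
    have "N \<le> l2" using Y_great[OF l2 N(2)] .
    then have "subseq \<rho>0 (take l2 v)" using take_sub_trans[OF N(1)] by simp
    moreover have "v ! l2 = a" using Y_last[OF l2] lastsg by simp
    moreover have "l2 < length v" using l2i iv by simp
    ultimately have "subseq ra (take (Suc l2) v)" using take_Suc_snoc[of l2 v] rdec by simp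
    moreover have "take (Suc l2) v = take (Suc l2) u" using l2i unfolding u v i_def by simp
    ultimately have "subseq ra (take (Suc l2) u)" by simp
    then have "i < Suc l2" using X_least[OF ra(1)] by simp
    then show False using l2i by simp
  qed
  have xj: "X \<le> x_attr u j"
  proof (rule ccontr)
    assume nl: "\<not> X \<le> x_attr u j"
    obtain \<rho> where rh: "xranker \<rho> u = Some j" "length \<rho> = x_attr u j"
      using x_attr_ex[OF ju] by auto
    have rne: "\<rho> \<noteq> []" using X_nonempty[OF rh(1)] .
    have lastrh: "last \<rho> = b" using X_last[OF rh(1)] uj by simp
    define \<rho>1 where "\<rho>1 = butlast \<rho>"
    have rdec: "\<rho> = \<rho>1 @ [b]" unfolding \<rho>1_def using append_butlast_last_id[OF rne] lastrh by simp
    have "subseq \<rho> (take (Suc j) u)" using X_take_sub[OF rh(1)] .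
    then have "subseq (\<rho>1 @ [b]) (take j u @ [b])" using take_Suc_snoc[OF ju] uj rdec by simp
    then have r1: "subseq \<rho>1 (take j u)" by simp
    have r1i: "subseq \<rho>1 (take i u)"
    proof (cases "\<rho>1 = []")
      case True then show ?thesis by simp
    next
      case False
      have "subseq \<rho>1 (take j u @ drop j u)" using r1 by (rule subseq_rev_drop_many)
      then have "subseq \<rho>1 u" by simp
      then obtain x1 where x1: "xranker \<rho>1 u = Some x1" using X_exists False by blast
      have "x1 < j" using X_least[OF x1 r1] .
      have "\<not> i \<le> x1"
      proof
        assume "i \<le> x1"
        then have "X \<le> x_attr u x1" using xlow \<open>x1 < j\<close> by simp
        moreover have "x_attr u x1 \<le> length \<rho>1" using x_attr_le[OF x1] .
        ultimately show False using nl rh(2) rdec by simp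
      qed
      then show ?thesis using take_sub_trans[OF X_take_sub[OF x1]] by simp
    qed
    have "take i u = take i v" unfolding u v i_def by simp
    then have "subseq \<rho> (take (Suc i) v)" using r1i take_Suc_snoc[OF iv] vi rdec by simp
    then have sr: "subseq \<rho> v" using take_sub_trans[of \<rho> "Suc i" v "length v"] iv by simp
    then obtain l' where l': "xranker \<rho> v = Some l'" using X_exists rne by blast
    have "l' < Suc i" using X_least[OF l' \<open>subseq \<rho> (take (Suc i) v)\<close>] .
    show False
    proof (cases "l' = i")
      case True
      then have "X \<le> length \<rho>" using x_attr_le[OF l'] X_def by simp
      then show False using nl rh(2) by simp
    next
      case False
      then have "l' < i" using \<open>l' < Suc i\<close> by simp
      then have "xranker \<rho> u = Some l'" using X_prefix[of \<rho> p "b # t" l' "a # s"] l' u v i_def by simp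
      then show False using rh(1) \<open>l' < i\<close> ij by simp
    qed
  qed
  have "\<forall>l. i \<le> l \<and> l \<le> j \<longrightarrow> x_attr u l = X \<and> x_attr u l + y_attr u l = k + 1"
  proof (intro allI impI)
    fix l assume l: "i \<le> l \<and> l \<le> j"
    have lu: "l < length u" using l ju by simp
    have sm: "x_attr u l + y_attr u l \<le> k + 1" using minu lu by simp
    have "X \<le> x_attr u l"
      using l xlow xj XaX' Xa_def by (cases "l = j") (auto simp: le_less)
    moreover have "k + 1 - X \<le> y_attr u l"
      using l ylow yi by (cases "l = i") auto
    ultimately show "x_attr u l = X \<and> x_attr u l + y_attr u l = k + 1" using sm Xk by arith
  qed
  then show ?thesis using ij ju uj X_def i_def by auto
qed



lemma first_diff:
  "length u = length v \<Longrightarrow> u \<noteq> v \<Longrightarrow> \<exists>p a b s t. a \<noteq> b \<and> u = p @ a # s \<and> v = p @ b # t"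
proof (induction u arbitrary: v)
  case Nil then show ?case by simp
next
  case (Cons x u')
  then obtain y v' where v: "v = y # v'" by (cases v) auto
  show ?case
  proof (cases "x = y")
    case False
    then show ?thesis using v by (intro exI[of _ "[]"]) auto
  next
    case True
    then have "length u' = length v'" "u' \<noteq> v'" using Cons.prems v by auto
    then obtain p a b s t where "a \<noteq> b" "u' = p @ a # s" "v' = p @ b # t" using Cons.IH by blast
    then show ?thesis using v True by (intro exI[of _ "x # p"]) auto
  qed
qed

lemma mono_chain:
  fixes u :: "'a::linorder list"
  shows "(\<forall>l. i \<le> l \<and> l < j \<longrightarrow> u ! l \<le> u ! Suc l) \<Longrightarrow> i \<le> j \<Longrightarrow> u ! i \<le> u ! j"
proof (induction j)
  case 0 then show ?case by simp
next
  case (Suc j)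
  show ?case
  proof (cases "i = Suc j")
    case True then show ?thesis by simp
  next
    case False
    then have "i \<le> j" using Suc.prems by simp
    then have "u ! i \<le> u ! j" using Suc by simp
    also have "u ! j \<le> u ! Suc j" using Suc.prems \<open>i \<le> j\<close> by simp
    finally show ?thesis .
  qed
qed

theorem theorem14:
  fixes k :: nat and u :: "'a::linorder list"
  assumes minlen: "\<forall>v. sim_k k v u \<longrightarrow> length u \<le> length v"
    and attr: "\<forall>i. Suc i < length u \<longrightarrow>
        (x_attr u i, y_attr u i) = (x_attr u (Suc i), y_attr u (Suc i))
        \<and> x_attr u i + y_attr u i = k + 1 \<longrightarrow> u ! i \<le> u ! Suc i"
  shows "is_shortlex_nf k u u"
  unfolding is_shortlex_nf_def
proof (intro conjI allI impI)
  show "sim_k k u u" by (rule sim_k_refl)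
  fix v assume "sim_k k v u" then show "length u \<le> length v" using minlen by blast
next
  fix v assume h: "sim_k k v u \<and> length v = length u"
  show "v = u \<or> lex_less u v"
  proof (cases "v = u")
    case True then show ?thesis by simp
  next
    case False
    then obtain p a b s t where ab: "a \<noteq> b" and u: "u = p @ a # s" and v: "v = p @ b # t"
      using first_diff[of u v] h by metis
    show ?thesis
    proof (cases "a < b")
      case True
      then show ?thesis unfolding lex_less_def using u v by blast
    next
      case False
      then have ba: "b < a" using ab by simp
      have sim: "sim_k k u v" using h sim_k_sym by blast
      have minv: "\<forall>w. sim_k k w v \<longrightarrow> length v \<le> length w"
        using minlen h sim_k_trans by metis
      have mu: "\<forall>l < length u. x_attr u l + y_attr u l \<le> k + 1"
        using min_attr[OF minlen] by blast
      have mv: "\<forall>l < length v. x_attr v l + y_attr v l \<le> k + 1"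
        using min_attr[OF minv] by blast
      obtain j where j: "length p < j" "j < length u" "u ! j = b"
        and eq: "\<forall>l. length p \<le> l \<and> l \<le> j \<longrightarrow> x_attr u l = x_attr v (length p) \<and> x_attr u l + y_attr u l = k + 1"
        using chain[OF sim u v ab mu mv] by blast
      have "\<forall>l. length p \<le> l \<and> l < j \<longrightarrow> u ! l \<le> u ! Suc l"
      proof (intro allI impI)
        fix l assume l: "length p \<le> l \<and> l < j"
        have e1: "x_attr u l = x_attr v (length p) \<and> x_attr u l + y_attr u l = k + 1" using eq l by (meson less_imp_le)
        have e2: "x_attr u (Suc l) = x_attr v (length p) \<and> x_attr u (Suc l) + y_attr u (Suc l) = k + 1"
          using eq l by (meson Suc_leI le_Suc_eq)
        have "Suc l < length u" using l j by simp
        moreover have "(x_attr u l, y_attr u l) = (x_attr u (Suc l), y_attr u (Suc l))" using e1 e2 by simp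
        ultimately show "u ! l \<le> u ! Suc l" using attr e1 by blast
      qed
      then have "u ! length p \<le> u ! j" by (rule mono_chain) (use j(1) in simp)
      then have "a \<le> b" using u j(3) by simp
      then show ?thesis using ba by simp
    qed
  qed
qed

end
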